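(* Let $G\in\mathcal{G}_{\Sigma,\Delta,\pi}$, $r\ge0$, $v\in V(G)$, and write $G^r_v=(H,v)$. Then for every disk $(H',v)\in\mathcal{D}^r_{\Sigma,\Delta,\pi}$ with $H'\subseteq G$, we have $H'\subseteq H$.
   Context: Fix an uncountably infinite set $\mathcal{V}$, sets $\Sigma,\Delta$, finite $\pi$. A graph $G$: countable $V(G)\subset\mathcal{V}$; a set $E(G)$ of pairwise disjoint two-element subsets of $V(G)\times\pi$; partial labelings $\sigma(G):V(G)\rightharpoonup\Sigma$, $\delta(G):E(G)\rightharpoonup\Delta$; $\mathcal{G}_{\Sigma,\Delta,\pi}$ the set of graphs. $G\subseteq H$: componentwise inclusion of $V,E,\sigma,\delta$ (partial functions as sets of pairs). $d_G$ shortest-path distance, $B_G(c,r)=\{u\mid d_G(c,u)\le r\}$. Disk $G^r_c=(H,c)$: $V(H)=B_G(c,r+1)$, $E(H)=\{\{u\!:\!i,v\!:\!j\}\in E(G)\mid\{u,v\}\cap B_G(c,r)\ne\emptyset\}$, $\sigma(H)=\sigma(G)|_{B_G(c,r)}$, $\delta(H)=\delta(G)|_{E(H)}$. $\mathcal{D}^r_{\Sigma,\Delta,\pi}$ is the set of all pointed graphs of the form $K^r_c$ for some graph $K$ and $c\in V(K)$. *)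

theory Defs
  imports "HOL-Library.Countable_Set" "HOL-Library.Extended_Nat"
begin

text \<open>Graphs over vertex universe 'v (the uncountable set V), vertex labels 's (Sigma),
edge labels 'd (Delta), ports 'p (the finite set pi).\<close>

record ('v, 's, 'd, 'p) graph =
  verts :: "'v set"
  edges :: "('v \<times> 'p) set set"
  vlab  :: "'v \<rightharpoonup> 's"
  elab  :: "('v \<times> 'p) set \<rightharpoonup> 'd"

definition is_graph :: "('v, 's, 'd, 'p) graph \<Rightarrow> bool" where
  "is_graph G \<longleftrightarrow>
     countable (verts G) \<and>
     (\<forall>e \<in> edges G. e \<subseteq> verts G \<times> UNIV \<and> card e = 2) \<and>
     (\<forall>e \<in> edges G. \<forall>e' \<in> edges G. e \<noteq> e' \<longrightarrow> e \<inter> e' = {}) \<and>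
     dom (vlab G) \<subseteq> verts G \<and>
     dom (elab G) \<subseteq> edges G"

definition subgraph :: "('v, 's, 'd, 'p) graph \<Rightarrow> ('v, 's, 'd, 'p) graph \<Rightarrow> bool" where
  "subgraph G H \<longleftrightarrow>
     verts G \<subseteq> verts H \<and> edges G \<subseteq> edges H \<and>
     vlab G \<subseteq>\<^sub>m vlab H \<and> elab G \<subseteq>\<^sub>m elab H"

definition adj :: "('v, 's, 'd, 'p) graph \<Rightarrow> ('v \<times> 'v) set" where
  "adj G = {(u, v). \<exists>i j. {(u, i), (v, j)} \<in> edges G}"

text \<open>Shortest-path distance (infinite if unreachable).\<close>
definition gdist :: "('v, 's, 'd, 'p) graph \<Rightarrow> 'v \<Rightarrow> 'v \<Rightarrow> enat" where
  "gdist G c u = (INF k \<in> {k. (c, u) \<in> (adj G) ^^ k}. enat k)"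

definition ball :: "('v, 's, 'd, 'p) graph \<Rightarrow> 'v \<Rightarrow> nat \<Rightarrow> 'v set" where
  "ball G c r = {u \<in> verts G. gdist G c u \<le> enat r}"

definition disk :: "('v, 's, 'd, 'p) graph \<Rightarrow> nat \<Rightarrow> 'v \<Rightarrow> ('v, 's, 'd, 'p) graph \<times> 'v" where
  "disk G r c =
     (let EH = {e \<in> edges G. \<exists>(u, i) \<in> e. u \<in> ball G c r} in
      (\<lparr> verts = ball G c (r + 1),
         edges = EH,
         vlab = vlab G |` ball G c r,
         elab = elab G |` EH \<rparr>, c))"

definition disks :: "nat \<Rightarrow> (('v, 's, 'd, 'p) graph \<times> 'v) set" where
  "disks r = {disk K r c | K c. is_graph K \<and> c \<in> verts K}"

end

theory Submission
  imports Defs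
begin

lemma gdist_le_iff:
  "gdist G c u \<le> enat s \<longleftrightarrow> (\<exists>k\<le>s. (c, u) \<in> (adj G) ^^ k)"
proof
  assume "\<exists>k\<le>s. (c, u) \<in> (adj G) ^^ k"
  then obtain k where "k \<le> s" "(c, u) \<in> (adj G) ^^ k" by blast
  then have "gdist G c u \<le> enat k" unfolding gdist_def by (auto intro: INF_lower)
  with \<open>k \<le> s\<close> show "gdist G c u \<le> enat s" by (meson enat_ord_simps(1) order_trans)
next
  assume a: "gdist G c u \<le> enat s"
  show "\<exists>k\<le>s. (c, u) \<in> (adj G) ^^ k"
  proof (rule ccontr)
    assume "\<not> ?thesis"
    then have "enat (Suc s) \<le> gdist G c u" unfolding gdist_def
      by (auto intro!: INF_greatest simp: not_le Suc_le_eq)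
    with a show False by (meson enat_ord_simps(2) lessI linorder_not_le order_trans)
  qed
qed

lemma adj_sym: "(u, w) \<in> adj G \<Longrightarrow> \<exists>i j. {(u, i), (w, j)} \<in> edges G"
  unfolding adj_def by auto

lemma edge_verts: "is_graph K \<Longrightarrow> e \<in> edges K \<Longrightarrow> (w, i) \<in> e \<Longrightarrow> w \<in> verts K"
  unfolding is_graph_def by (metis SigmaE fst_conv subsetD)

lemma disk_simps:
  "edges (fst (disk K r c)) = {e \<in> edges K. \<exists>(u, i) \<in> e. u \<in> ball K c r}"
  "verts (fst (disk K r c)) = ball K c (r + 1)"
  "vlab (fst (disk K r c)) = vlab K |` ball K c r"
  "elab (fst (disk K r c)) = elab K |` {e \<in> edges K. \<exists>(u, i) \<in> e. u \<in> ball K c r}"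
  "snd (disk K r c) = c"
  by (simp_all add: disk_def Let_def)

lemma path_transfer:
  assumes K: "is_graph K" and sub: "edges (fst (disk K r v)) \<subseteq> edges G"
  shows "k \<le> Suc r \<Longrightarrow> (v, u) \<in> (adj K) ^^ k \<Longrightarrow> (v, u) \<in> (adj G) ^^ k"
proof (induction k arbitrary: u)
  case 0
  then show ?case by simp
next
  case (Suc k)
  then obtain w where vw: "(v, w) \<in> (adj K) ^^ k" and wu: "(w, u) \<in> adj K" by auto
  from Suc have IH: "(v, w) \<in> (adj G) ^^ k" using vw by simp
  from wu obtain i j where e: "{(w, i), (u, j)} \<in> edges K" unfolding adj_def by auto
  have "w \<in> verts K" using edge_verts[OF K e, of w i] by simp
  moreover have "k \<le> r" using Suc.prems(1) by simp
  then have "gdist K v w \<le> enat r" unfolding gdist_le_iff using vw by blast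
  ultimately have wb: "w \<in> ball K v r" unfolding ball_def by simp
  have "\<exists>(x, y) \<in> {(w, i), (u, j)}. x \<in> ball K v r" using wb by blast
  with e have "{(w, i), (u, j)} \<in> edges (fst (disk K r v))"
    unfolding disk_simps by blast
  with sub have "{(w, i), (u, j)} \<in> edges G" by (rule subsetD)
  then have "(w, u) \<in> adj G" unfolding adj_def by blast
  with IH show ?case by auto
qed

lemma ball_transfer:
  assumes K: "is_graph K" and sub: "edges (fst (disk K r v)) \<subseteq> edges G"
    and vs: "verts (fst (disk K r v)) \<subseteq> verts G"
    and s: "s \<le> Suc r" and u: "u \<in> ball K v s"
  shows "u \<in> ball G v s"
proof -
  have uK: "u \<in> verts K" and g: "gdist K v u \<le> enat s" using u unfolding ball_def by simp_all
  from g obtain k where k: "k \<le> s" "(v, u) \<in> (adj K) ^^ k"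
    unfolding gdist_le_iff by blast
  have "k \<le> Suc r" using k(1) s by simp
  then have p: "(v, u) \<in> (adj G) ^^ k" using path_transfer[OF K sub] k(2) by blast
  have "gdist K v u \<le> enat (r+1)" using g s by (simp add: order_trans)
  then have "u \<in> ball K v (r+1)" using uK unfolding ball_def by simp
  then have "u \<in> verts G" using vs unfolding disk_simps by blast
  moreover have "gdist G v u \<le> enat s" unfolding gdist_le_iff using k(1) p by blast
  ultimately show ?thesis unfolding ball_def by simp
qed

theorem lemma2p5:
  fixes G H H' :: "('v, 's, 'd, 'p) graph" and r :: nat and v :: 'v
  assumes "uncountable (UNIV :: 'v set)"
    and "finite (UNIV :: 'p set)"
    and "is_graph G"
    and "v \<in> verts G"
    and "disk G r v = (H, v)"
    and "(H', v) \<in> disks r"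
    and "subgraph H' G"
  shows "subgraph H' H"
proof -
  from assms(6) obtain K c where K: "is_graph K" "c \<in> verts K" and D: "(H', v) = disk K r c"
    unfolding disks_def by blast
  have "snd (disk K r c) = v" using D by (metis snd_conv)
  then have cv: "c = v" unfolding disk_simps .
  have H': "H' = fst (disk K r v)" using D cv by (metis fst_conv)
  have H: "H = fst (disk G r v)" using assms(5) by (metis fst_conv)
  have sg: "subgraph (fst (disk K r v)) G" using assms(7) H' by simp
  have se: "edges (fst (disk K r v)) \<subseteq> edges G" and sv: "verts (fst (disk K r v)) \<subseteq> verts G"
    and sl: "vlab (fst (disk K r v)) \<subseteq>\<^sub>m vlab G" and sel: "elab (fst (disk K r v)) \<subseteq>\<^sub>m elab G"
    using sg unfolding subgraph_def by simp_all
  have bt: "\<And>s u. s \<le> Suc r \<Longrightarrow> u \<in> ball K v s \<Longrightarrow> u \<in> ball G v s"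
    using ball_transfer[OF K(1) se sv] by blast
  have b1: "ball K v (r+1) \<subseteq> ball G v (r+1)" using bt by (simp add: subset_iff)
  have b0: "ball K v r \<subseteq> ball G v r" using bt by (simp add: subset_iff)
  have EE: "edges (fst (disk K r v)) \<subseteq> edges (fst (disk G r v))"
  proof
    fix e assume e: "e \<in> edges (fst (disk K r v))"
    with se have eG: "e \<in> edges G" by (rule subsetD)
    from e have "\<exists>(u, i) \<in> e. u \<in> ball K v r" unfolding disk_simps by simp
    then have "\<exists>(u, i) \<in> e. u \<in> ball G v r" using b0 by blast
    with eG show "e \<in> edges (fst (disk G r v))" unfolding disk_simps by simp
  qed
  have V: "verts (fst (disk K r v)) \<subseteq> verts (fst (disk G r v))"
    using b1 unfolding disk_simps by simp
  have L: "vlab (fst (disk K r v)) \<subseteq>\<^sub>m vlab (fst (disk G r v))"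
    unfolding map_le_def
  proof
    fix x assume x: "x \<in> dom (vlab (fst (disk K r v)))"
    then have xb: "x \<in> ball K v r" unfolding disk_simps by (simp add: dom_def restrict_map_def split: if_splits)
    then have "x \<in> ball G v r" using b0 by blast
    moreover have "vlab (fst (disk K r v)) x = vlab G x" using sl x unfolding map_le_def by blast
    ultimately show "vlab (fst (disk K r v)) x = vlab (fst (disk G r v)) x"
      unfolding disk_simps by simp
  qed
  have EL: "elab (fst (disk K r v)) \<subseteq>\<^sub>m elab (fst (disk G r v))"
    unfolding map_le_def
  proof
    fix x assume x: "x \<in> dom (elab (fst (disk K r v)))"
    then have "x \<in> edges (fst (disk K r v))" unfolding disk_simps
      by (simp add: dom_def restrict_map_def split: if_splits)
    then have xe: "x \<in> edges (fst (disk G r v))" using EE by blast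
    have "elab (fst (disk G r v)) x = elab G x" using xe unfolding disk_simps by simp
    moreover have "elab (fst (disk K r v)) x = elab G x" using sel x unfolding map_le_def by blast
    ultimately show "elab (fst (disk K r v)) x = elab (fst (disk G r v)) x" by simp
  qed
  show ?thesis unfolding subgraph_def H H' using V EE L EL by blast
qed

end
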